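(* Assume the setting of the context (two temperatures). For every $\gamma\in\mathcal{P}(S^2)$, $I_1(\gamma)=I^\infty(\gamma)$.
   Context: **Dynamics.** $S$ is a finite set. For $k=1,2$, $\Gamma^k$ is an irreducible intensity matrix on $S$, reversible with respect to its unique invariant distribution $\mu_k$. Set $q_k(x)=\sum_{y\ne x}\Gamma^k_{x,y}$ and $\mu=\mu_1\times\mu_2$ on $S^2$. **Weights and infinite swapping rates.** - $\rho(x_1,x_2)=\mu(x_1,x_2)/(\mu(x_1,x_2)+\mu(x_2,x_1))$. - The infinite swapping rates are $\Gamma^\infty_{(x_1,x_2),(y_1,x_2)}=\rho(x_1,x_2)\Gamma^1_{x_1,y_1}+\rho(x_2,x_1)\Gamma^2_{x_1,y_1}$ for $y_1\ne x_1$. - They are $\Gamma^\infty_{(x_1,x_2),(x_1,y_2)}=\rho(x_1,x_2)\Gamma^2_{x_2,y_2}+\rho(x_2,x_1)\Gamma^1_{x_2,y_2}$ for $y_2\ne x_2$. - All other off-diagonal rates are $0$. - $q^\infty(\mathbf{x})=\sum_{\mathbf{y}\ne\mathbf{x}}\Gamma^\infty_{\mathbf{x},\mathbf{y}}$. - $\bar\mu(x_1,x_2)=\frac12[\mu(x_1,x_2)+\mu(x_2,x_1)]$. **Map and rate functions.** - $(M\nu)(x_1,x_2)=\rho(x_1,x_2)[\nu(x_1,x_2)+\nu(x_2,x_1)]$. - For $\nu\in\mathcal{P}(S^2)$ with $\theta=\nu/\bar\mu$, $J(\nu)=\sum_{\mathbf{x}}q^\infty(\mathbf{x})\theta(\mathbf{x})\bar\mu(\mathbf{x})-\sum_{\mathbf{x}\ne\mathbf{y}}\theta^{1/2}(\mathbf{x})\theta^{1/2}(\mathbf{y})\Gamma^\infty_{\mathbf{x},\mathbf{y}}\bar\mu(\mathbf{x})$.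 - $I_1(\gamma)=\inf\{J(\nu):\nu\in\mathcal{P}(S^2),\ M\nu=\gamma\}$, with $\inf\emptyset=+\infty$. **Uncoupled generator.** $\Gamma$ is the rate matrix of the uncoupled process on $S^2$: $\Gamma_{(x_1,x_2),(y_1,x_2)}=\Gamma^1_{x_1,y_1}$ for $y_1\ne x_1$, and $\Gamma_{(x_1,x_2),(x_1,y_2)}=\Gamma^2_{x_2,y_2}$ for $y_2\ne x_2$. All other off-diagonal entries are $0$, and $q(x_1,x_2)=q_1(x_1)+q_2(x_2)$. **Definition of $I^\infty$.** For $\gamma\in\mathcal{P}(S^2)$ with $f=\gamma/\mu$ satisfying $f(x_1,x_2)=f(x_2,x_1)$ for all $(x_1,x_2)$, set \[ I^\infty(\gamma)=\sum_{\mathbf{x}}q(\mathbf{x})\gamma(\mathbf{x})-\sum_{\mathbf{x}\ne\mathbf{y}}f^{1/2}(\mathbf{x})f^{1/2}(\mathbf{y})\Gamma_{\mathbf{x},\mathbf{y}}\mu(\mathbf{x}). \] Otherwise set $I^\infty(\gamma)=+\infty$. *)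

theory Defs
  imports "HOL-Analysis.Analysis" "HOL-Library.Extended_Real"
begin

definition pdist :: "('b::finite \<Rightarrow> real) \<Rightarrow> bool" where
  "pdist \<nu> \<longleftrightarrow> (\<forall>x. \<nu> x \<ge> 0) \<and> sum \<nu> UNIV = 1"

definition intensity_matrix :: "('a::finite \<Rightarrow> 'a \<Rightarrow> real) \<Rightarrow> bool" where
  "intensity_matrix G \<longleftrightarrow> (\<forall>x y. x \<noteq> y \<longrightarrow> G x y \<ge> 0) \<and> (\<forall>x. (\<Sum>y\<in>UNIV. G x y) = 0)"

definition irreducible_rates :: "('a::finite \<Rightarrow> 'a \<Rightarrow> real) \<Rightarrow> bool" where
  "irreducible_rates G \<longleftrightarrow> (\<forall>x y. (x, y) \<in> {(a, b). a \<noteq> b \<and> G a b > 0}\<^sup>*)"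

definition invariant_dist :: "('a::finite \<Rightarrow> 'a \<Rightarrow> real) \<Rightarrow> ('a \<Rightarrow> real) \<Rightarrow> bool" where
  "invariant_dist G m \<longleftrightarrow> pdist m \<and> (\<forall>y. (\<Sum>x\<in>UNIV. m x * G x y) = 0)"

definition reversible :: "('a::finite \<Rightarrow> 'a \<Rightarrow> real) \<Rightarrow> ('a \<Rightarrow> real) \<Rightarrow> bool" where
  "reversible G m \<longleftrightarrow> (\<forall>x y. m x * G x y = m y * G y x)"

definition qrate :: "('b::finite \<Rightarrow> 'b \<Rightarrow> real) \<Rightarrow> 'b \<Rightarrow> real" where
  "qrate G x = (\<Sum>y\<in>UNIV - {x}. G x y)"

definition prodm :: "('a \<Rightarrow> real) \<Rightarrow> ('a \<Rightarrow> real) \<Rightarrow> 'a \<times> 'a \<Rightarrow> real" where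
  "prodm m1 m2 = (\<lambda>(x1, x2). m1 x1 * m2 x2)"

definition swp :: "'a \<times> 'a \<Rightarrow> 'a \<times> 'a" where
  "swp = (\<lambda>(x1, x2). (x2, x1))"

definition rho :: "('a \<times> 'a \<Rightarrow> real) \<Rightarrow> 'a \<times> 'a \<Rightarrow> real" where
  "rho m x = m x / (m x + m (swp x))"

definition mubar :: "('a \<times> 'a \<Rightarrow> real) \<Rightarrow> 'a \<times> 'a \<Rightarrow> real" where
  "mubar m x = (m x + m (swp x)) / 2"

text \<open>Infinite swapping rates (only off-diagonal entries are used; the diagonal is set to 0).\<close>
definition Gamma_inf :: "('a \<Rightarrow> 'a \<Rightarrow> real) \<Rightarrow> ('a \<Rightarrow> 'a \<Rightarrow> real) \<Rightarrow> ('a \<times> 'a \<Rightarrow> real)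
    \<Rightarrow> 'a \<times> 'a \<Rightarrow> 'a \<times> 'a \<Rightarrow> real" where
  "Gamma_inf G1 G2 m x y =
     (if snd y = snd x \<and> fst y \<noteq> fst x then
        rho m x * G1 (fst x) (fst y) + rho m (swp x) * G2 (fst x) (fst y)
      else if fst y = fst x \<and> snd y \<noteq> snd x then
        rho m x * G2 (snd x) (snd y) + rho m (swp x) * G1 (snd x) (snd y)
      else 0)"

text \<open>Uncoupled generator on S^2 (off-diagonal entries; diagonal set to 0).\<close>
definition Gamma_unc :: "('a \<Rightarrow> 'a \<Rightarrow> real) \<Rightarrow> ('a \<Rightarrow> 'a \<Rightarrow> real) \<Rightarrow> 'a \<times> 'a \<Rightarrow> 'a \<times> 'a \<Rightarrow> real" where
  "Gamma_unc G1 G2 x y =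
     (if snd y = snd x \<and> fst y \<noteq> fst x then G1 (fst x) (fst y)
      else if fst y = fst x \<and> snd y \<noteq> snd x then G2 (snd x) (snd y)
      else 0)"

definition Mmap :: "('a \<times> 'a \<Rightarrow> real) \<Rightarrow> ('a \<times> 'a \<Rightarrow> real) \<Rightarrow> 'a \<times> 'a \<Rightarrow> real" where
  "Mmap m \<nu> x = rho m x * (\<nu> x + \<nu> (swp x))"

definition Jfun :: "('a::finite \<Rightarrow> 'a \<Rightarrow> real) \<Rightarrow> ('a \<Rightarrow> 'a \<Rightarrow> real) \<Rightarrow> ('a \<times> 'a \<Rightarrow> real)
    \<Rightarrow> ('a \<times> 'a \<Rightarrow> real) \<Rightarrow> real" where
  "Jfun G1 G2 m \<nu> =
     (let \<theta> = (\<lambda>x. \<nu> x / mubar m x); Gi = Gamma_inf G1 G2 m in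
       (\<Sum>x\<in>UNIV. qrate Gi x * \<theta> x * mubar m x)
       - (\<Sum>x\<in>UNIV. \<Sum>y\<in>UNIV - {x}. sqrt (\<theta> x) * sqrt (\<theta> y) * Gi x y * mubar m x))"

definition I1 :: "('a::finite \<Rightarrow> 'a \<Rightarrow> real) \<Rightarrow> ('a \<Rightarrow> 'a \<Rightarrow> real) \<Rightarrow> ('a \<Rightarrow> real) \<Rightarrow> ('a \<Rightarrow> real)
    \<Rightarrow> ('a \<times> 'a \<Rightarrow> real) \<Rightarrow> ereal" where
  "I1 G1 G2 m1 m2 \<gamma> =
     Inf ((\<lambda>\<nu>. ereal (Jfun G1 G2 (prodm m1 m2) \<nu>)) ` {\<nu>. pdist \<nu> \<and> Mmap (prodm m1 m2) \<nu> = \<gamma>})"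

definition I_inf :: "('a::finite \<Rightarrow> 'a \<Rightarrow> real) \<Rightarrow> ('a \<Rightarrow> 'a \<Rightarrow> real) \<Rightarrow> ('a \<Rightarrow> real) \<Rightarrow> ('a \<Rightarrow> real)
    \<Rightarrow> ('a \<times> 'a \<Rightarrow> real) \<Rightarrow> ereal" where
  "I_inf G1 G2 m1 m2 \<gamma> =
     (let m = prodm m1 m2; f = (\<lambda>x. \<gamma> x / m x); G = Gamma_unc G1 G2 in
      if (\<forall>x. f x = f (swp x)) then
        ereal ((\<Sum>x\<in>UNIV. (qrate G1 (fst x) + qrate G2 (snd x)) * \<gamma> x)
               - (\<Sum>x\<in>UNIV. \<Sum>y\<in>UNIV - {x}. sqrt (f x) * sqrt (f y) * G x y * m x))
      else \<infinity>)"

end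

theory Submission
  imports Defs
begin


lemma swp_swp[simp]: "swp (swp x) = x" by (cases x) (simp add: swp_def)

lemma swp_inj[simp]: "swp x = swp y \<longleftrightarrow> x = y" by (metis swp_swp)

lemma sum_swp: "(\<Sum>x\<in>UNIV. g (swp x)) = (\<Sum>x\<in>(UNIV::('a::finite\<times>'a) set). g x)"
  by (rule sum.reindex_bij_witness[where i=swp and j=swp]) auto

lemma sum_minus_swp: "(\<Sum>y\<in>UNIV-{x}. g (swp y)) = (\<Sum>y\<in>(UNIV::('a::finite\<times>'a) set)-{swp x}. g y)"
  by (rule sum.reindex_bij_witness[where i=swp and j=swp]) auto

lemma dsum_swp: "(\<Sum>x\<in>UNIV. \<Sum>y\<in>UNIV-{x}. h (swp x) (swp y)) = (\<Sum>x\<in>(UNIV::('a::finite\<times>'a) set). \<Sum>y\<in>UNIV-{x}. h x y)"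
proof -
  have "(\<Sum>x\<in>UNIV. \<Sum>y\<in>UNIV-{x}. h (swp x) (swp y)) = (\<Sum>x\<in>UNIV. \<Sum>y\<in>UNIV-{swp x}. h (swp x) y)"
    by (simp add: sum_minus_swp)
  also have "\<dots> = (\<Sum>x\<in>(UNIV::('a::finite\<times>'a) set). \<Sum>y\<in>UNIV-{x}. h x y)"
    by (rule sum_swp)
  finally show ?thesis .
qed

lemma Gi_decomp: "Gamma_inf G1 G2 m x y = rho m x * Gamma_unc G1 G2 x y + rho m (swp x) * Gamma_unc G1 G2 (swp x) (swp y)"
  unfolding Gamma_inf_def Gamma_unc_def swp_def by (cases x; cases y) auto

lemma sum_minus_if: "(\<Sum>a\<in>UNIV-{x}. g a) = (\<Sum>a\<in>(UNIV::'b::finite set). if a \<noteq> x then g a else 0)"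
proof -
  have "UNIV - {x} = {a. a \<noteq> x}" by auto
  then show ?thesis by (simp add: sum.If_cases)
qed

lemma sum_if_eq: "(\<Sum>a\<in>(UNIV::'b::finite set). \<Sum>b\<in>B. if a = c then h b else 0) = (\<Sum>b\<in>B. h b)"
proof -
  have "(\<Sum>a\<in>(UNIV::'b set). \<Sum>b\<in>B. if a = c then h b else 0) = (\<Sum>a\<in>(UNIV::'b set). if a = c then (\<Sum>b\<in>B. h b) else 0)"
    by (rule sum.cong) auto
  then show ?thesis by simp
qed

lemma qU: "qrate (Gamma_unc G1 G2) x = qrate G1 (fst x) + qrate G2 (snd x)"
proof -
  obtain x1 x2 where x: "x = (x1, x2)" by (cases x)
  have "qrate (Gamma_unc G1 G2) x = (\<Sum>y\<in>UNIV. if y \<noteq> x then Gamma_unc G1 G2 x y else 0)"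
    unfolding qrate_def by (rule sum_minus_if)
  also have "\<dots> = (\<Sum>y\<in>UNIV. Gamma_unc G1 G2 x y)"
    by (rule sum.cong) (auto simp: Gamma_unc_def)
  also have "\<dots> = (\<Sum>a\<in>UNIV. \<Sum>b\<in>UNIV. Gamma_unc G1 G2 x (a, b))"
    by (simp add: UNIV_Times_UNIV[symmetric] sum.cartesian_product del: UNIV_Times_UNIV)
  also have "\<dots> = (\<Sum>a\<in>UNIV. \<Sum>b\<in>UNIV. (if b = x2 then (if a \<noteq> x1 then G1 x1 a else 0) else 0)
        + (if a = x1 then (if b \<noteq> x2 then G2 x2 b else 0) else 0))"
    by (rule sum.cong, simp, rule sum.cong) (auto simp: Gamma_unc_def x)
  also have "\<dots> = (\<Sum>a\<in>UNIV. if a \<noteq> x1 then G1 x1 a else 0) + (\<Sum>b\<in>UNIV. if b \<noteq> x2 then G2 x2 b else 0)"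
    by (simp add: sum.distrib sum_if_eq)
  also have "\<dots> = qrate G1 (fst x) + qrate G2 (snd x)"
    unfolding qrate_def x by (simp add: sum_minus_if)
  finally show ?thesis .
qed

lemma cs_sqrt:
  fixes a b c d :: real
  assumes "a \<ge> 0" "b \<ge> 0" "c \<ge> 0" "d \<ge> 0"
  shows "sqrt a * sqrt b + sqrt c * sqrt d \<le> sqrt (a + c) * sqrt (b + d)"
proof -
  have "2 * (sqrt (a*d) * sqrt (b*c)) \<le> a*d + b*c"
  proof -
    have u: "sqrt (a*d)^2 = a*d" "sqrt (b*c)^2 = b*c" using assms by simp_all
    have "0 \<le> (sqrt (a*d) - sqrt (b*c))^2" by simp
    then show ?thesis unfolding power2_diff u by linarith
  qed
  then have "(sqrt a * sqrt b + sqrt c * sqrt d)^2 \<le> ((a+c)*(b+d))"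
    using assms by (simp add: power2_eq_square algebra_simps real_sqrt_mult)
  then have "sqrt a * sqrt b + sqrt c * sqrt d \<le> sqrt ((a+c)*(b+d))"
    using real_le_rsqrt by blast
  then show ?thesis by (simp add: real_sqrt_mult)
qed

lemma pos_dist:
  assumes "invariant_dist G m" "reversible G m" "irreducible_rates G"
  shows "m x > 0"
proof -
  have nn: "\<forall>x. m x \<ge> 0" and s1: "sum m UNIV = 1" using assms(1) by (auto simp: invariant_dist_def pdist_def)
  have "\<exists>x0. m x0 > 0"
  proof (rule ccontr)
    assume "\<not> ?thesis"
    then have "\<forall>x. m x = 0" using nn by (metis not_le order.antisym)
    then show False using s1 by simp
  qed
  then obtain x0 where x0: "m x0 > 0" by blast
  have "(x0, x) \<in> {(a, b). a \<noteq> b \<and> G a b > 0}\<^sup>*" using assms(3) by (simp add: irreducible_rates_def)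
  then show ?thesis
  proof (induction rule: rtrancl_induct)
    case base then show ?case using x0 .
  next
    case (step a b)
    then have "m a * G a b > 0" by auto
    then have "m b * G b a > 0" using assms(2) by (simp add: reversible_def)
    then show ?case using nn by (metis less_eq_real_def mult_eq_0_iff)
  qed
qed



lemma rho_mubar:
  assumes mpos: "\<forall>x. m x > 0"
  shows "rho m x * mubar m x = m x / 2" "rho m (swp x) * mubar m x = m (swp x) / 2"
    "mubar m (swp x) = mubar m x" "mubar m x > 0"
proof -
  have p: "m x + m (swp x) > 0" by (metis add_pos_pos mpos)
  show "rho m x * mubar m x = m x / 2" unfolding rho_def mubar_def using p by simp
  show "rho m (swp x) * mubar m x = m (swp x) / 2" unfolding rho_def mubar_def using p by (simp add: add.commute)
  show "mubar m (swp x) = mubar m x" unfolding mubar_def by (simp add: add.commute)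
  show "mubar m x > 0" unfolding mubar_def using p by simp
qed

lemma J_formula:
  fixes m :: "'a::finite \<times> 'a \<Rightarrow> real"
  assumes mpos: "\<forall>x. m x > 0" and M: "Mmap m \<nu> = \<gamma>"
    and th: "\<theta> = (\<lambda>x. \<nu> x / mubar m x)"
  shows "Jfun G1 G2 m \<nu> = (\<Sum>x\<in>UNIV. qrate (Gamma_unc G1 G2) x * \<gamma> x)
     - (\<Sum>x\<in>UNIV. \<Sum>y\<in>UNIV-{x}. m x * Gamma_unc G1 G2 x y *
          (sqrt (\<theta> x) * sqrt (\<theta> y) + sqrt (\<theta> (swp x)) * sqrt (\<theta> (swp y)))) / 2"
proof -
  define U where "U = Gamma_unc G1 G2"
  define Gi where "Gi = Gamma_inf G1 G2 m"
  define qU where "qU = qrate U"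
  have gam: "\<gamma> x = rho m x * (\<nu> x + \<nu> (swp x))" for x using M by (auto simp: Mmap_def)
  have qGi: "qrate Gi x = rho m x * qU x + rho m (swp x) * qU (swp x)" for x
  proof -
    have "qrate Gi x = (\<Sum>y\<in>UNIV-{x}. rho m x * U x y + rho m (swp x) * U (swp x) (swp y))"
      unfolding qrate_def Gi_def U_def by (simp add: Gi_decomp)
    also have "\<dots> = rho m x * qU x + rho m (swp x) * (\<Sum>y\<in>UNIV-{x}. U (swp x) (swp y))"
      unfolding qU_def qrate_def by (simp add: sum.distrib sum_distrib_left)
    also have "(\<Sum>y\<in>UNIV-{x}. U (swp x) (swp y)) = qU (swp x)"
      unfolding qU_def qrate_def by (rule sum_minus_swp)
    finally show ?thesis .
  qed
  have T1: "(\<Sum>x\<in>UNIV. qrate Gi x * (\<nu> x / mubar m x) * mubar m x) = (\<Sum>x\<in>UNIV. qU x * \<gamma> x)"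
  proof -
    have "(\<Sum>x\<in>UNIV. qrate Gi x * (\<nu> x / mubar m x) * mubar m x)
        = (\<Sum>x\<in>UNIV. rho m x * qU x * \<nu> x) + (\<Sum>x\<in>UNIV. rho m (swp x) * qU (swp x) * \<nu> x)"
    proof -
      have nz: "mubar m x \<noteq> 0" for x using rho_mubar(4)[OF mpos, of x] by simp
      show ?thesis by (simp add: nz qGi sum.distrib[symmetric] algebra_simps)
    qed
    also have "(\<Sum>x\<in>UNIV. rho m (swp x) * qU (swp x) * \<nu> x) = (\<Sum>x\<in>UNIV. rho m x * qU x * \<nu> (swp x))"
      using sum_swp[of "\<lambda>x. rho m x * qU x * \<nu> (swp x)"] by simp
    also have "(\<Sum>x\<in>UNIV. rho m x * qU x * \<nu> x) + (\<Sum>x\<in>UNIV. rho m x * qU x * \<nu> (swp x))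
        = (\<Sum>x\<in>UNIV. qU x * \<gamma> x)"
      by (simp add: gam sum.distrib[symmetric] algebra_simps)
    finally show ?thesis .
  qed
  have T2: "(\<Sum>x\<in>UNIV. \<Sum>y\<in>UNIV-{x}. sqrt (\<nu> x / mubar m x) * sqrt (\<nu> y / mubar m y) * Gi x y * mubar m x)
     = (\<Sum>x\<in>UNIV. \<Sum>y\<in>UNIV-{x}. m x * U x y *
          (sqrt (\<theta> x) * sqrt (\<theta> y) + sqrt (\<theta> (swp x)) * sqrt (\<theta> (swp y)))) / 2"
  proof -
    have "(\<Sum>x\<in>UNIV. \<Sum>y\<in>UNIV-{x}. sqrt (\<nu> x / mubar m x) * sqrt (\<nu> y / mubar m y) * Gi x y * mubar m x)
      = (\<Sum>x\<in>UNIV. \<Sum>y\<in>UNIV-{x}. m x * U x y * (sqrt (\<theta> x) * sqrt (\<theta> y)) / 2)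
        + (\<Sum>x\<in>UNIV. \<Sum>y\<in>UNIV-{x}. (\<lambda>x y. m x * U x y * (sqrt (\<theta> (swp x)) * sqrt (\<theta> (swp y))) / 2) (swp x) (swp y))"
    proof -
      have e: "sqrt (\<nu> x / mubar m x) * sqrt (\<nu> y / mubar m y) * Gi x y * mubar m x
          = m x * U x y * (sqrt (\<theta> x) * sqrt (\<theta> y)) / 2
            + m (swp x) * U (swp x) (swp y) * (sqrt (\<theta> x) * sqrt (\<theta> y)) / 2" for x y
      proof -
        have "Gi x y * mubar m x = (rho m x * mubar m x) * U x y + (rho m (swp x) * mubar m x) * U (swp x) (swp y)"
          unfolding Gi_def U_def Gi_decomp by (simp add: algebra_simps)
        then have "Gi x y * mubar m x = m x / 2 * U x y + m (swp x) / 2 * U (swp x) (swp y)"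
          using rho_mubar[OF mpos] by simp
        then have "(sqrt (\<theta> x) * sqrt (\<theta> y)) * (Gi x y * mubar m x) = (sqrt (\<theta> x) * sqrt (\<theta> y)) * (m x / 2 * U x y + m (swp x) / 2 * U (swp x) (swp y))"
          by simp
        then show ?thesis unfolding th by (simp add: algebra_simps)
      qed
      show ?thesis by (simp add: e sum.distrib)
    qed
    also have "(\<Sum>x\<in>UNIV. \<Sum>y\<in>UNIV-{x}. (\<lambda>x y. m x * U x y * (sqrt (\<theta> (swp x)) * sqrt (\<theta> (swp y))) / 2) (swp x) (swp y))
       = (\<Sum>x\<in>UNIV. \<Sum>y\<in>UNIV-{x}. m x * U x y * (sqrt (\<theta> (swp x)) * sqrt (\<theta> (swp y))) / 2)"
      by (rule dsum_swp)
    finally show ?thesis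
      by (simp add: sum.distrib[symmetric] sum_divide_distrib[symmetric] algebra_simps)
  qed
  show ?thesis
    unfolding Jfun_def Let_def Gi_def[symmetric] U_def[symmetric] using T1 T2 qU_def by simp
qed



theorem corollary3p3:
  fixes G1 G2 :: "'a::finite \<Rightarrow> 'a \<Rightarrow> real"
    and m1 m2 :: "'a \<Rightarrow> real"
    and \<gamma> :: "'a \<times> 'a \<Rightarrow> real"
  assumes "intensity_matrix G1" and "irreducible_rates G1"
    and "invariant_dist G1 m1" and "\<forall>m. invariant_dist G1 m \<longrightarrow> m = m1"
    and "reversible G1 m1"
    and "intensity_matrix G2" and "irreducible_rates G2"
    and "invariant_dist G2 m2" and "\<forall>m. invariant_dist G2 m \<longrightarrow> m = m2"
    and "reversible G2 m2"
    and "pdist \<gamma>"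
  shows "I1 G1 G2 m1 m2 \<gamma> = I_inf G1 G2 m1 m2 \<gamma>"
proof -
  define m where "m = prodm m1 m2"
  have m1p: "m1 a > 0" for a using pos_dist assms(3,5,2) by blast
  have m2p: "m2 a > 0" for a using pos_dist assms(8,10,7) by blast
  have mpos: "\<forall>x. m x > 0" unfolding m_def prodm_def using m1p m2p by auto
  have mp: "m x > 0" for x using mpos by blast
  have msp: "m x + m (swp x) > 0" for x using mp by (metis add_pos_pos)
  define f where "f = (\<lambda>x. \<gamma> x / m x)"
  define U where "U = Gamma_unc G1 G2"
  have gnn: "\<gamma> x \<ge> 0" for x using assms(11) by (cases x) (auto simp: pdist_def)
  have gsum: "sum \<gamma> UNIV = 1" using assms(11) by (simp add: pdist_def)
  have fnn: "f x \<ge> 0" for x unfolding f_def using gnn[of x] mp[of x] by (simp add: divide_nonneg_pos)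
  have gf: "\<gamma> x = f x * m x" for x unfolding f_def using mp[of x] by simp
  have Unn: "U x y \<ge> 0" if "y \<noteq> x" for x y
    using that assms(1,6) unfolding U_def Gamma_unc_def intensity_matrix_def
    by (cases x; cases y) auto
  have Iinf: "I_inf G1 G2 m1 m2 \<gamma> = (if \<forall>x. f x = f (swp x) then
      ereal ((\<Sum>x\<in>UNIV. (qrate G1 (fst x) + qrate G2 (snd x)) * \<gamma> x)
               - (\<Sum>x\<in>UNIV. \<Sum>y\<in>UNIV - {x}. sqrt (f x) * sqrt (f y) * U x y * m x))
      else \<infinity>)"
    unfolding I_inf_def Let_def m_def f_def U_def by simp
  have I1e: "I1 G1 G2 m1 m2 \<gamma> = (INF \<nu>\<in>{\<nu>. pdist \<nu> \<and> Mmap m \<nu> = \<gamma>}. ereal (Jfun G1 G2 m \<nu>))"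
    unfolding I1_def m_def ..
  have fsym: "f x = (\<nu> x + \<nu> (swp x)) / (m x + m (swp x))" if M: "Mmap m \<nu> = \<gamma>" for \<nu> x
  proof -
    have "\<gamma> x = m x / (m x + m (swp x)) * (\<nu> x + \<nu> (swp x))"
      using M by (auto simp: Mmap_def rho_def)
    then show ?thesis unfolding f_def using mp[of x] msp[of x] by (simp add: field_simps)
  qed
  show ?thesis
  proof (cases "\<forall>x. f x = f (swp x)")
    case False
    have E: "{\<nu>. pdist \<nu> \<and> Mmap m \<nu> = \<gamma>} = {}"
    proof (rule ccontr)
      assume "{\<nu>. pdist \<nu> \<and> Mmap m \<nu> = \<gamma>} \<noteq> {}"
      then obtain \<nu> where M: "Mmap m \<nu> = \<gamma>" by blast
      have "f x = f (swp x)" for x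
        using fsym[OF M, of x] fsym[OF M, of "swp x"] by (simp add: add.commute)
      then show False using False by blast
    qed
    have "I1 G1 G2 m1 m2 \<gamma> = \<infinity>"
      unfolding I1e E image_empty Inf_empty by (simp add: top_ereal_def)
    moreover have "I_inf G1 G2 m1 m2 \<gamma> = \<infinity>" using False Iinf by simp
    ultimately show ?thesis by simp
  next
    case True
    define R where "R = (\<Sum>x\<in>UNIV. qrate U x * \<gamma> x)
               - (\<Sum>x\<in>UNIV. \<Sum>y\<in>UNIV - {x}. sqrt (f x) * sqrt (f y) * U x y * m x)"
    have IR: "I_inf G1 G2 m1 m2 \<gamma> = ereal R"
      unfolding Iinf R_def using True by (simp add: U_def qU)
    define \<nu>0 where "\<nu>0 = (\<lambda>x. (\<gamma> x + \<gamma> (swp x)) / 2)"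
    have s0: "\<gamma> x + \<gamma> (swp x) = f x * (m x + m (swp x))" for x
      using gf[of x] gf[of "swp x"] True by (simp add: algebra_simps)
    have M0: "Mmap m \<nu>0 = \<gamma>"
    proof
      fix x
      have "Mmap m \<nu>0 x = m x / (m x + m (swp x)) * (\<gamma> x + \<gamma> (swp x))"
        unfolding Mmap_def rho_def \<nu>0_def by (simp add: add.commute)
      also have "\<dots> = \<gamma> x" using s0[of x] msp[of x] gf[of x] by simp
      finally show "Mmap m \<nu>0 x = \<gamma> x" .
    qed
    have P0: "pdist \<nu>0"
    proof -
      have "sum \<nu>0 UNIV = (sum \<gamma> UNIV + (\<Sum>x\<in>UNIV. \<gamma> (swp x))) / 2"
        unfolding \<nu>0_def by (simp add: sum.distrib sum_divide_distrib[symmetric])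
      then have "sum \<nu>0 UNIV = 1" using gsum sum_swp[of \<gamma>] by simp
      moreover have "\<nu>0 x \<ge> 0" for x unfolding \<nu>0_def using gnn[of x] gnn[of "swp x"] by simp
      ultimately show ?thesis by (simp add: pdist_def)
    qed
    have J0: "Jfun G1 G2 m \<nu>0 = R"
    proof -
      define \<theta> where "\<theta> = (\<lambda>x. \<nu>0 x / mubar m x)"
      have th: "\<theta> x = f x" for x
        unfolding \<theta>_def \<nu>0_def mubar_def using s0[of x] msp[of x] by simp
      have "Jfun G1 G2 m \<nu>0 = (\<Sum>x\<in>UNIV. qrate U x * \<gamma> x)
         - (\<Sum>x\<in>UNIV. \<Sum>y\<in>UNIV-{x}. m x * U x y * (2 * (sqrt (f x) * sqrt (f y)))) / 2"
        using J_formula[OF mpos M0 \<theta>_def, of G1 G2] True by (simp add: th U_def)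
      also have "(\<Sum>x\<in>UNIV. \<Sum>y\<in>UNIV-{x}. m x * U x y * (2 * (sqrt (f x) * sqrt (f y)))) / 2
          = (\<Sum>x\<in>UNIV. \<Sum>y\<in>UNIV - {x}. sqrt (f x) * sqrt (f y) * U x y * m x)"
        by (simp add: sum_divide_distrib mult.commute mult.left_commute)
      finally show ?thesis unfolding R_def .
    qed
    have lb: "R \<le> Jfun G1 G2 m \<nu>" if P: "pdist \<nu>" and M: "Mmap m \<nu> = \<gamma>" for \<nu>
    proof -
      define \<theta> where "\<theta> = (\<lambda>x. \<nu> x / mubar m x)"
      have nnu: "\<nu> x \<ge> 0" for x using P by (cases x) (auto simp: pdist_def)
      have thnn: "\<theta> x \<ge> 0" for x
        unfolding \<theta>_def using nnu[of x] rho_mubar(4)[OF mpos, of x] by simp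
      have thsum: "\<theta> x + \<theta> (swp x) = 2 * f x" for x
      proof -
        have "\<theta> x + \<theta> (swp x) = (\<nu> x + \<nu> (swp x)) / mubar m x"
          unfolding \<theta>_def rho_mubar(3)[OF mpos] by (simp add: add_divide_distrib)
        also have "\<dots> = 2 * f x"
          unfolding fsym[OF M, of x] mubar_def using msp[of x] by simp
        finally show ?thesis .
      qed
      have br: "sqrt (\<theta> x) * sqrt (\<theta> y) + sqrt (\<theta> (swp x)) * sqrt (\<theta> (swp y)) \<le> 2 * (sqrt (f x) * sqrt (f y))" for x y
      proof -
        have "sqrt (\<theta> x) * sqrt (\<theta> y) + sqrt (\<theta> (swp x)) * sqrt (\<theta> (swp y))
            \<le> sqrt (\<theta> x + \<theta> (swp x)) * sqrt (\<theta> y + \<theta> (swp y))"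
          by (rule cs_sqrt) (simp_all add: thnn)
        also have "\<dots> = sqrt 2 * sqrt 2 * (sqrt (f x) * sqrt (f y))"
          unfolding thsum by (simp add: real_sqrt_mult)
        also have "\<dots> = 2 * (sqrt (f x) * sqrt (f y))" by simp
        finally show ?thesis .
      qed
      have "(\<Sum>x\<in>UNIV. \<Sum>y\<in>UNIV-{x}. m x * U x y *
          (sqrt (\<theta> x) * sqrt (\<theta> y) + sqrt (\<theta> (swp x)) * sqrt (\<theta> (swp y))))
         \<le> (\<Sum>x\<in>UNIV. \<Sum>y\<in>UNIV-{x}. m x * U x y * (2 * (sqrt (f x) * sqrt (f y))))"
        by (intro sum_mono mult_left_mono br mult_nonneg_nonneg) (auto simp: Unn less_imp_le[OF mp])
      also have "(\<Sum>x\<in>UNIV. \<Sum>y\<in>UNIV-{x}. m x * U x y * (2 * (sqrt (f x) * sqrt (f y))))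
          = 2 * (\<Sum>x\<in>UNIV. \<Sum>y\<in>UNIV - {x}. sqrt (f x) * sqrt (f y) * U x y * m x)"
        by (simp add: sum_distrib_left algebra_simps)
      finally have "(\<Sum>x\<in>UNIV. \<Sum>y\<in>UNIV-{x}. m x * U x y *
          (sqrt (\<theta> x) * sqrt (\<theta> y) + sqrt (\<theta> (swp x)) * sqrt (\<theta> (swp y)))) / 2
          \<le> (\<Sum>x\<in>UNIV. \<Sum>y\<in>UNIV - {x}. sqrt (f x) * sqrt (f y) * U x y * m x)" by simp
      then show ?thesis
        unfolding J_formula[OF mpos M \<theta>_def, of G1 G2] R_def U_def[symmetric] by simp
    qed
    have "I1 G1 G2 m1 m2 \<gamma> = ereal R"
      unfolding I1e
    proof (rule antisym)
      show "(INF \<nu>\<in>{\<nu>. pdist \<nu> \<and> Mmap m \<nu> = \<gamma>}. ereal (Jfun G1 G2 m \<nu>)) \<le> ereal R"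
        using INF_lower[of \<nu>0 "{\<nu>. pdist \<nu> \<and> Mmap m \<nu> = \<gamma>}" "\<lambda>\<nu>. ereal (Jfun G1 G2 m \<nu>)"] P0 M0 J0
        by simp
      show "ereal R \<le> (INF \<nu>\<in>{\<nu>. pdist \<nu> \<and> Mmap m \<nu> = \<gamma>}. ereal (Jfun G1 G2 m \<nu>))"
        by (rule INF_greatest) (use lb in auto)
    qed
    then show ?thesis using IR by simp
  qed
qed

end
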